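(* Let $T$ be a compactum and $\mathbf a,\mathbf b,\mathbf c,\mathbf d$ entourages of $T$. If $\mathbf a-\mathbf b-\mathbf c\ (4)$, $\mathbf a\#\mathbf d$ and $\mathbf c\#\mathbf d$, then $\mathbf b\#\mathbf d$.
   Context: Let $T$ be a compact Hausdorff space, $S^2T$ the space of unordered pairs of points of $T$ (diagonal allowed), $\Delta^2T$ the diagonal. An entourage is a neighborhood of $\Delta^2T$ in $S^2T$. For an entourage $\mathbf e$, $\Delta_{\mathbf e}$ is the graph distance on $T$ for the graph with vertex set $T$ and edges the pairs in $\mathbf e$; for sets, $\Delta_{\mathbf e}(a,b)=\inf$ over $x\in a,y\in b$. A set is $\mathbf e$-small if its $\Delta_{\mathbf e}$-diameter is $\le1$. Entourages $\mathbf a,\mathbf b$ are unlinked ($\mathbf a\bowtie\mathbf b$) if $T=a\cup b$ for an $\mathbf a$-small $a$ and a $\mathbf b$-small $b$; otherwise linked ($\mathbf a\#\mathbf b$). Standing conventions: every entourage considered is linked with itself and $T$ has $\Delta_{\mathbf a}$-diameter $>4$. For $\mathbf a\bowtie\mathbf b$, $\mathrm{sh}_{\mathbf a}\mathbf b=\bigcap\{a: a\ \mathbf a\text{-small},\ T\setminus a\ \mathbf b\text{-small}\}$. $\mathbf a-\mathbf b-\mathbf c\ (k)$ means $\mathbf a\bowtie\mathbf b\bowtie\mathbf c$ and $\Delta_{\mathbf b}(\mathrm{sh}_{\mathbf b}\mathbf a,\mathrm{sh}_{\mathbf b}\mathbf c)>k$. *)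

theory Defs
  imports "HOL-Analysis.Analysis" "HOL-Library.Extended_Nat"
begin

text \<open>The compactum T is the universe of a type of class t2_space with compact UNIV.
  Unordered pairs (points of S^2T) are represented by symmetric relations on T; a
  neighbourhood of the diagonal in S^2T corresponds to a symmetric subset of T x T
  containing an open neighbourhood of the diagonal.\<close>

definition entourage :: "('a::topological_space \<times> 'a) set \<Rightarrow> bool" where
  "entourage E \<longleftrightarrow> sym E \<and> (\<exists>U. open U \<and> Id \<subseteq> U \<and> U \<subseteq> E)"

definition gdist :: "('a \<times> 'a) set \<Rightarrow> 'a \<Rightarrow> 'a \<Rightarrow> enat" where
  "gdist E x y = Inf {enat n | n. (x, y) \<in> E ^^ n}"

definition setdist :: "('a \<times> 'a) set \<Rightarrow> 'a set \<Rightarrow> 'a set \<Rightarrow> enat" where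
  "setdist E A B = Inf {gdist E x y | x y. x \<in> A \<and> y \<in> B}"

definition gdiam :: "('a \<times> 'a) set \<Rightarrow> 'a set \<Rightarrow> enat" where
  "gdiam E A = Sup {gdist E x y | x y. x \<in> A \<and> y \<in> A}"

definition small :: "('a \<times> 'a) set \<Rightarrow> 'a set \<Rightarrow> bool" where
  "small E A \<longleftrightarrow> gdiam E A \<le> 1"

definition unlinked :: "('a \<times> 'a) set \<Rightarrow> ('a \<times> 'a) set \<Rightarrow> bool" where
  "unlinked A B \<longleftrightarrow> (\<exists>a b. UNIV = a \<union> b \<and> small A a \<and> small B b)"

definition linked :: "('a \<times> 'a) set \<Rightarrow> ('a \<times> 'a) set \<Rightarrow> bool" where
  "linked A B \<longleftrightarrow> \<not> unlinked A B"

definition sh :: "('a \<times> 'a) set \<Rightarrow> ('a \<times> 'a) set \<Rightarrow> 'a set" where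
  "sh A B = \<Inter> {a. small A a \<and> small B (UNIV - a)}"

definition chain3 :: "('a \<times> 'a) set \<Rightarrow> ('a \<times> 'a) set \<Rightarrow> ('a \<times> 'a) set \<Rightarrow> enat \<Rightarrow> bool" where
  "chain3 A B C k \<longleftrightarrow> unlinked A B \<and> unlinked B C \<and> setdist B (sh B A) (sh B C) > k"

text \<open>Standing conventions for an entourage considered in the paper.\<close>
definition admissible :: "('a::topological_space \<times> 'a) set \<Rightarrow> bool" where
  "admissible E \<longleftrightarrow> entourage E \<and> linked E E \<and> gdiam E UNIV > 4"

end

theory Submission
  imports Defs
begin

lemma gdist_le: "gdist E x y \<le> enat k \<longleftrightarrow> (\<exists>n\<le>k. (x,y) \<in> E^^n)"
proof
  assume h: "gdist E x y \<le> enat k"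
  let ?S = "{enat n | n. (x, y) \<in> E ^^ n}"
  have ne: "?S \<noteq> {}"
  proof
    assume "?S = {}"
    then have "gdist E x y = \<infinity>" unfolding gdist_def by (simp add: Inf_enat_def)
    with h show False by simp
  qed
  then have "gdist E x y \<in> ?S" unfolding gdist_def Inf_enat_def
    by (simp only: if_False) (rule LeastI_ex, blast)
  then obtain n where "gdist E x y = enat n" "(x,y) \<in> E^^n" by blast
  with h show "\<exists>n\<le>k. (x,y) \<in> E^^n" by auto
next
  assume "\<exists>n\<le>k. (x,y) \<in> E^^n"
  then obtain n where n: "n \<le> k" "(x,y) \<in> E^^n" by blast
  have "gdist E x y \<le> enat n" unfolding gdist_def by (rule Inf_lower) (use n in blast)
  also have "\<dots> \<le> enat k" using n by simp
  finally show "gdist E x y \<le> enat k" .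
qed

lemma gdist_trans:
  assumes "gdist E x y \<le> enat m" "gdist E y z \<le> enat n"
  shows "gdist E x z \<le> enat (m+n)"
proof -
  obtain i where i: "i \<le> m" "(x,y) \<in> E^^i" using gdist_le[THEN iffD1, OF assms(1)] by blast
  obtain j where j: "j \<le> n" "(y,z) \<in> E^^j" using gdist_le[THEN iffD1, OF assms(2)] by blast
  have "(x,z) \<in> E^^(i+j)" unfolding relpow_add using i(2) j(2) by (rule relcompI)
  moreover have "i + j \<le> m + n" using i j by simp
  ultimately show ?thesis by (intro gdist_le[THEN iffD2] exI conjI)
qed

lemma small_iff: "small E A \<longleftrightarrow> (\<forall>x\<in>A. \<forall>y\<in>A. gdist E x y \<le> enat 1)"
  unfolding small_def gdiam_def by (auto simp: Sup_le_iff one_enat_def)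

lemma small_mono: "small E B \<Longrightarrow> A \<subseteq> B \<Longrightarrow> small E A"
  unfolding small_iff by blast

lemma sh_nonempty:
  assumes "linked B B" "gdiam A UNIV > 2"
  shows "sh B A \<noteq> {}"
proof
  assume e: "sh B A = {}"
  have ex: "\<exists>x. small B x \<and> small A (UNIV - x) \<and> u \<notin> x" for u
    using e unfolding sh_def by blast
  have "gdist A u v \<le> enat 2" for u v
  proof -
    obtain xu where xu: "small B xu" "small A (UNIV - xu)" "u \<notin> xu" using ex by blast
    obtain xv where xv: "small B xv" "small A (UNIV - xv)" "v \<notin> xv" using ex by blast
    show ?thesis
    proof (cases "(UNIV - xu) \<inter> (UNIV - xv) = {}")
      case True
      then have "UNIV = xu \<union> xv" by blast
      with xu xv assms(1) show ?thesis unfolding linked_def unlinked_def by blast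
    next
      case False
      then obtain w where w: "w \<notin> xu" "w \<notin> xv" by blast
      have "gdist A u w \<le> enat 1" using small_iff[THEN iffD1, OF xu(2)] xu(3) w by blast
      moreover have "gdist A w v \<le> enat 1" using small_iff[THEN iffD1, OF xv(2)] xv(3) w by blast
      ultimately have "gdist A u v \<le> enat (1+1)" by (rule gdist_trans)
      then show ?thesis by (simp add: numeral_2_eq_2)
    qed
  qed
  then have "gdiam A UNIV \<le> 2" unfolding gdiam_def
    by (auto simp: Sup_le_iff numeral_eq_enat)
  with assms(2) show False by simp
qed

lemma meets:
  assumes "small b x" "small a (UNIV - x)" "small d q" "linked a d"
  shows "\<exists>u. u \<in> x \<and> u \<notin> q"
proof (rule ccontr)
  assume "\<not> ?thesis"
  then have "UNIV - q \<subseteq> UNIV - x" by blast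
  then have "small a (UNIV - q)" using assms(2) small_mono by blast
  then have "unlinked a d" unfolding unlinked_def using assms(3) by blast
  with assms(4) show False unfolding linked_def by blast
qed

lemma F_nonempty:
  assumes "unlinked a b" shows "\<exists>x. small b x \<and> small a (UNIV - x)"
proof -
  obtain y x where "UNIV = y \<union> x" "small a y" "small b x" using assms unfolding unlinked_def by blast
  then show ?thesis using small_mono[of a y "UNIV - x"] by blast
qed

lemma unlinked_sym: "unlinked a b \<Longrightarrow> unlinked b a"
  unfolding unlinked_def by (metis sup_commute)

theorem lemma3p3:
  fixes a b c d :: "('t::t2_space \<times> 't) set"
  assumes "compact (UNIV :: 't set)"
    and "admissible a" and "admissible b" and "admissible c" and "admissible d"
    and "chain3 a b c 4"
    and "linked a d" and "linked c d"
  shows "linked b d"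
proof (rule ccontr)
  assume "\<not> linked b d"
  then obtain p q where pq: "UNIV = p \<union> q" "small b p" "small d q"
    unfolding linked_def unlinked_def by blast
  have ch: "unlinked a b" "unlinked b c" "setdist b (sh b a) (sh b c) > 4"
    using assms(6) unfolding chain3_def by auto
  have bb: "linked b b" using assms(3) unfolding admissible_def by blast
  have da: "gdiam a UNIV > 2"
  proof -
    have "(2::enat) < 4" by (simp add: numeral_eq_enat)
    moreover have "4 < gdiam a UNIV" using assms(2) unfolding admissible_def by blast
    ultimately show ?thesis by (rule order.strict_trans)
  qed
  have cc: "gdiam c UNIV > 2"
  proof -
    have "(2::enat) < 4" by (simp add: numeral_eq_enat)
    moreover have "4 < gdiam c UNIV" using assms(4) unfolding admissible_def by blast
    ultimately show ?thesis by (rule order.strict_trans)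
  qed
  obtain s where s: "s \<in> sh b a" using sh_nonempty[OF bb da] by blast
  obtain t where t: "t \<in> sh b c" using sh_nonempty[OF bb cc] by blast
  obtain xa where xa: "small b xa" "small a (UNIV - xa)"
    using F_nonempty[OF ch(1)] by blast
  obtain xc where xc: "small b xc" "small c (UNIV - xc)"
    using F_nonempty[OF unlinked_sym[OF ch(2)]] by blast
  obtain u where u: "u \<in> xa" "u \<notin> q" using meets[OF xa pq(3) assms(7)] by blast
  obtain v where v: "v \<in> xc" "v \<notin> q" using meets[OF xc pq(3) assms(8)] by blast
  have sxa: "s \<in> xa" using s xa unfolding sh_def by blast
  have txc: "t \<in> xc" using t xc unfolding sh_def by blast
  have up: "u \<in> p" "v \<in> p" using u v pq(1) by blast+
  have "gdist b s u \<le> enat 1" using small_iff[THEN iffD1, OF xa(1)] sxa u(1) by blast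
  moreover have "gdist b u v \<le> enat 1" using small_iff[THEN iffD1, OF pq(2)] up by blast
  moreover have "gdist b v t \<le> enat 1" using small_iff[THEN iffD1, OF xc(1)] txc v(1) by blast
  ultimately have "gdist b s t \<le> enat (1+1+1)" by (blast intro: gdist_trans)
  then have g3: "gdist b s t \<le> enat 3" by (simp add: numeral_3_eq_3)
  have "setdist b (sh b a) (sh b c) \<le> gdist b s t"
    unfolding setdist_def by (rule Inf_lower) (use s t in blast)
  also note g3
  also have "enat 3 \<le> 4" by (simp add: numeral_eq_enat)
  finally have "setdist b (sh b a) (sh b c) \<le> 4" .
  then have "\<not> 4 < setdist b (sh b a) (sh b c)" by (simp only: not_less)
  then show False using ch(3) by (rule notE)
qed

end
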